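(* Fix $A>0$, $\mu>0$, $a>0$ and put $\lambda:=2\mu/A$, $q:=a\mu$. Fix $\epsilon\in(0,\pi/2)$ and, for $R>0$, let $\mu_R$ be the horizontal path $\varphi=\alpha+iR$, $-\pi/2+\epsilon\le\alpha\le\pi/2-\epsilon$, in the complex $\varphi$-plane. For $t>0$ and $0<x,y<a$ define $$k_{\mathrm{hfa}}(t,x,y):=\lim_{R\to\infty}\frac{1}{2\pi i}\int_{\mu_R}K_{t,x,y}(\varphi)\,d\varphi ,$$ where $K_{t,x,y}$ is the function defined in the context. Then, if $t>2a$, the limit exists and $k_{\mathrm{hfa}}(t,x,y)=0$ for all $0<x,y<a$.
   Context: This concerns the wave equation $\partial_t^2\phi-\partial_x^2\phi+V(x)\phi=0$ with the toy potential $V(x)=A\delta(x)+\mu^2\theta(x-a)$ ($\delta$ the Dirac delta, $\theta$ the Heaviside function). Complex frequencies $s$ are parametrized by a complex angle $\varphi$ via $s=i\mu\sin\varphi$, $\varphi$ in the strip $Q=\{\varphi\in\mathbb{C}:-\pi/2<\mathrm{Re}\,\varphi<\pi/2\}$. Define $$F(\lambda,\varphi):=1+i\lambda\sin\varphi-e^{-2i\varphi-2qi\sin\varphi}.$$ With $\tau:=\mu t$, $\xi:=\mu(x+y)$, $\eta:=\mu|x-y|$, define $$K_{t,x,y}(\varphi):=\frac{(1+i\lambda\sin\varphi)e^{i\sin\varphi(\tau-\eta)}+e^{i\sin\varphi(\tau+\eta-2q)-2i\varphi}-(1+i\lambda\sin\varphi)e^{i\sin\varphi(\tau+\xi-2q)-2i\varphi}-e^{i\sin\varphi(\tau-\xi)}}{2\tan(\varphi)\,F(\lambda,\varphi)}.$$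 (This is $e^{st}G(s,x,y)\,ds$ written in the variable $\varphi$, where $G$ is the Green's function of the mode equation $s^2f-f''+Vf=0$ inside the well $0<x,y<a$; $k_{\mathrm{hfa}}$ is the contribution of the high-frequency arc to the solution kernel.) *)

theory Defs
  imports "HOL-Analysis.Analysis"
begin

definition Fres :: "real \<Rightarrow> real \<Rightarrow> complex \<Rightarrow> complex" where
  "Fres lam q \<phi> = 1 + \<i> * of_real lam * sin \<phi> - exp (- 2 * \<i> * \<phi> - 2 * of_real q * \<i> * sin \<phi>)"

definition Kint :: "real \<Rightarrow> real \<Rightarrow> real \<Rightarrow> real \<Rightarrow> real \<Rightarrow> real \<Rightarrow> complex \<Rightarrow> complex" where
  "Kint A \<mu> a t x y \<phi> =
    (let lam = 2 * \<mu> / A; q = a * \<mu>; \<tau> = \<mu> * t; \<xi> = \<mu> * (x + y); \<eta> = \<mu> * \<bar>x - y\<bar>;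
         s = sin \<phi>; L = 1 + \<i> * of_real lam * s
     in (L * exp (\<i> * s * of_real (\<tau> - \<eta>))
         + exp (\<i> * s * of_real (\<tau> + \<eta> - 2 * q) - 2 * \<i> * \<phi>)
         - L * exp (\<i> * s * of_real (\<tau> + \<xi> - 2 * q) - 2 * \<i> * \<phi>)
         - exp (\<i> * s * of_real (\<tau> - \<xi>)))
        / (2 * tan \<phi> * Fres lam q \<phi>))"

text \<open>The integral over the horizontal path phi = alpha + i R,
  -pi/2+eps <= alpha <= pi/2-eps, times 1/(2 pi i); d phi = d alpha.\<close>
definition arc_integral :: "real \<Rightarrow> real \<Rightarrow> real \<Rightarrow> real \<Rightarrow> real \<Rightarrow> real \<Rightarrow> real \<Rightarrow> real \<Rightarrow> complex" where
  "arc_integral A \<mu> a \<epsilon> t x y R =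
     integral {-pi/2 + \<epsilon> .. pi/2 - \<epsilon>} (\<lambda>\<alpha>. Kint A \<mu> a t x y (Complex \<alpha> R)) / (2 * pi * \<i>)"

end

theory Submission
  imports Defs "HOL-Real_Asymp.Real_Asymp"
begin

lemma pointwise:
  fixes lam q \<tau> \<eta> \<xi> \<alpha> R c0 :: real
  defines "S \<equiv> (exp R - exp (-R)) / 2" and "C \<equiv> (exp R + exp (-R)) / 2"
  defines "\<phi> \<equiv> Complex \<alpha> R"
  assumes lam: "lam \<ge> 0" and q: "q \<ge> 0" and tau: "\<tau> > 2 * q"
    and eta: "0 \<le> \<eta>" "\<eta> \<le> 4 * q" and xi: "0 \<le> \<xi>" "\<xi> \<le> 4 * q"
    and R: "R > 0" and c0: "c0 > 0" "cos \<alpha> \<ge> c0"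
    and big: "exp (2 * R) \<ge> 2 * (1 + 2 * lam * C)"
  shows "sin \<phi> \<noteq> 0" "cos \<phi> \<noteq> 0"
    "1 + \<i> * of_real lam * sin \<phi> - exp (- 2 * \<i> * \<phi> - 2 * of_real q * \<i> * sin \<phi>) \<noteq> 0"
    "norm ((( 1 + \<i> * of_real lam * sin \<phi>) * exp (\<i> * sin \<phi> * of_real (\<tau> - \<eta>))
         + exp (\<i> * sin \<phi> * of_real (\<tau> + \<eta> - 2 * q) - 2 * \<i> * \<phi>)
         - ( 1 + \<i> * of_real lam * sin \<phi>) * exp (\<i> * sin \<phi> * of_real (\<tau> + \<xi> - 2 * q) - 2 * \<i> * \<phi>)
         - exp (\<i> * sin \<phi> * of_real (\<tau> - \<xi>)))
        / (2 * tan \<phi> * (1 + \<i> * of_real lam * sin \<phi> - exp (- 2 * \<i> * \<phi> - 2 * of_real q * \<i> * sin \<phi>))))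
      \<le> (8 + 8 * lam * C) * C * exp (- ((\<tau> - 2 * q) * c0 * S)) / (c0 * S)"
proof -
  define s where "s = sin \<phi>"
  define D where "D = Im s"
  define k where "k = \<tau> - 2 * q"
  have k: "k > 0" using tau by (simp add: k_def)
  have S0: "S > 0" using R by (simp add: S_def)
  have SC: "S \<le> C" by (simp add: S_def C_def)
  have C0: "C > 0" by (simp add: C_def add_pos_pos)
  have ReS: "Re s = sin \<alpha> * C" by (simp add: s_def \<phi>_def Re_sin C_def)
  have ImS: "Im s = cos \<alpha> * S" by (simp add: s_def \<phi>_def Im_sin S_def)
  have ReC: "Re (cos \<phi>) = cos \<alpha> * C" by (simp add: \<phi>_def Re_cos C_def)
  have ImC: "Im (cos \<phi>) = - (sin \<alpha> * S)" by (simp add: \<phi>_def Im_cos S_def field_simps)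
  have cpos: "cos \<alpha> > 0" using c0 by linarith
  have D0: "D \<ge> c0 * S" unfolding D_def ImS using S0 c0 by (simp add: mult_right_mono)
  have Dpos: "D > 0" using D0 c0 S0 by (smt (verit) mult_pos_pos)
  show "sin \<phi> \<noteq> 0" using Dpos by (auto simp: D_def s_def)
  have "Re (cos \<phi>) > 0" unfolding ReC using cpos C0 by simp
  then show "cos \<phi> \<noteq> 0" by auto
  have ns: "norm s \<le> 2 * C"
  proof -
    have a1: "\<bar>sin \<alpha> * C\<bar> \<le> C" using C0 by (simp add: abs_mult abs_sin_le_one mult_left_le_one_le)
    have a2: "\<bar>cos \<alpha>\<bar> * S \<le> 1 * S" using S0 by (intro mult_right_mono) auto
    have a3: "\<bar>cos \<alpha> * S\<bar> = \<bar>cos \<alpha>\<bar> * S" using S0 by (simp add: abs_mult)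
    show ?thesis using cmod_le[of s] ReS ImS a1 a2 a3 SC by linarith
  qed
  have nc: "norm (cos \<phi>) \<le> 2 * C"
  proof -
    have a1: "\<bar>cos \<alpha> * C\<bar> \<le> C" using C0 by (simp add: abs_mult abs_cos_le_one mult_left_le_one_le)
    have a2: "\<bar>sin \<alpha>\<bar> * S \<le> 1 * S" using S0 by (intro mult_right_mono) auto
    have a3: "\<bar>- (sin \<alpha> * S)\<bar> = \<bar>sin \<alpha>\<bar> * S" using S0 by (simp add: abs_mult)
    show ?thesis using cmod_le[of "cos \<phi>"] ReC ImC a1 a2 a3 SC by linarith
  qed
  have nsD: "norm s \<ge> D" unfolding D_def using abs_Im_le_cmod[of s] by linarith
  define L where "L = 1 + \<i> * of_real lam * s"
  have nL: "norm L \<le> 1 + 2 * lam * C"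
  proof -
    have "norm L \<le> 1 + norm (\<i> * of_real lam * s)" unfolding L_def by (metis norm_one norm_triangle_ineq)
    also have "norm (\<i> * of_real lam * s) = lam * norm s" using lam by (simp add: norm_mult)
    also have "lam * norm s \<le> lam * (2 * C)" using ns lam by (simp add: mult_left_mono)
    finally show ?thesis by simp
  qed
  define P where "P = exp (2 * R + 2 * q * D)"
  define E where "E = exp (- 2 * \<i> * \<phi> - 2 * of_real q * \<i> * s)"
  have nE: "norm E = P" unfolding E_def P_def D_def by (simp add: norm_exp_eq_Re \<phi>_def)
  have P1: "P \<ge> exp (2 * R)" unfolding P_def using q Dpos by simp
  have P2: "P \<ge> 2 * norm L" using P1 big nL by (smt (verit))
  have Ppos: "P > 0" by (simp add: P_def)
  have nF: "norm (L - E) \<ge> P / 2" using norm_triangle_ineq2[of E L] nE P2 by (simp add: norm_minus_commute)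
  define e where "e = exp (- (k * D))"
  have epos: "e > 0" by (simp add: e_def)
  have ex1: "norm (exp (\<i> * s * of_real r)) = exp (- (r * D))" for r
    by (simp add: norm_exp_eq_Re D_def)
  have ex2: "norm (exp (\<i> * s * of_real r - 2 * \<i> * \<phi>)) = exp (- (r * D) + 2 * R)" for r
    by (simp add: norm_exp_eq_Re D_def \<phi>_def)
  have b1: "exp (- (r * D)) \<le> P * e" if "r + 2 * q - k \<ge> 0" for r
  proof -
    have "0 \<le> (r + 2 * q - k) * D" using that Dpos by simp
    then have "- (r * D) \<le> 2 * R + 2 * q * D + - (k * D)" using R by (simp add: algebra_simps)
    then show ?thesis unfolding P_def e_def by (simp flip: exp_add)
  qed
  have b2: "exp (- (r * D) + 2 * R) \<le> P * e" if "r + 2 * q - k \<ge> 0" for r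
  proof -
    have "0 \<le> (r + 2 * q - k) * D" using that Dpos by simp
    then have "- (r * D) + 2 * R \<le> 2 * R + 2 * q * D + - (k * D)" by (simp add: algebra_simps)
    then show ?thesis unfolding P_def e_def by (simp flip: exp_add)
  qed
  define N where "N = L * exp (\<i> * s * of_real (\<tau> - \<eta>))
         + exp (\<i> * s * of_real (\<tau> + \<eta> - 2 * q) - 2 * \<i> * \<phi>)
         - L * exp (\<i> * s * of_real (\<tau> + \<xi> - 2 * q) - 2 * \<i> * \<phi>)
         - exp (\<i> * s * of_real (\<tau> - \<xi>))"
  have nN: "norm N \<le> (2 * norm L + 2) * (P * e)"
  proof -
    have t1: "norm (L * exp (\<i> * s * of_real (\<tau> - \<eta>))) \<le> norm L * (P * e)"
      unfolding norm_mult ex1 using b1[of "\<tau> - \<eta>"] eta k_def by (simp add: mult_left_mono)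
    have t2: "norm (exp (\<i> * s * of_real (\<tau> + \<eta> - 2 * q) - 2 * \<i> * \<phi>)) \<le> P * e"
      unfolding ex2 using b2[of "\<tau> + \<eta> - 2 * q"] eta k_def by simp
    have t3: "norm (L * exp (\<i> * s * of_real (\<tau> + \<xi> - 2 * q) - 2 * \<i> * \<phi>)) \<le> norm L * (P * e)"
      unfolding norm_mult ex2 using b2[of "\<tau> + \<xi> - 2 * q"] xi k_def by (simp add: mult_left_mono)
    have t4: "norm (exp (\<i> * s * of_real (\<tau> - \<xi>))) \<le> P * e"
      unfolding ex1 using b1[of "\<tau> - \<xi>"] xi k_def by simp
    have "norm N \<le> norm (L * exp (\<i> * s * of_real (\<tau> - \<eta>)))
       + norm (exp (\<i> * s * of_real (\<tau> + \<eta> - 2 * q) - 2 * \<i> * \<phi>))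
       + norm (L * exp (\<i> * s * of_real (\<tau> + \<xi> - 2 * q) - 2 * \<i> * \<phi>))
       + norm (exp (\<i> * s * of_real (\<tau> - \<xi>)))" unfolding N_def
      by (smt (verit) norm_triangle_ineq norm_triangle_ineq4)
    then show ?thesis using t1 t2 t3 t4 by (simp add: algebra_simps)
  qed
  have ntan: "norm (tan \<phi>) \<ge> D / (2 * C)"
  proof -
    have "norm (tan \<phi>) = norm s / norm (cos \<phi>)" by (simp add: tan_def s_def norm_divide)
    moreover have "D / (2 * C) \<le> norm s / norm (cos \<phi>)"
      using nsD nc Dpos C0 \<open>cos \<phi> \<noteq> 0\<close> by (intro frac_le) auto
    ultimately show ?thesis by simp
  qed
  have FnE: "L - E \<noteq> 0" using nF Ppos by auto
  then show "1 + \<i> * of_real lam * sin \<phi> - exp (- 2 * \<i> * \<phi> - 2 * of_real q * \<i> * sin \<phi>) \<noteq> 0"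
    by (simp add: L_def E_def s_def)
  have "norm (N / (2 * tan \<phi> * (L - E))) = norm N / (2 * norm (tan \<phi>) * norm (L - E))"
    by (simp add: norm_divide norm_mult)
  also have "\<dots> \<le> ((2 * norm L + 2) * (P * e)) / (2 * (D / (2 * C)) * (P / 2))"
    using nN ntan nF Dpos C0 Ppos epos
    by (intro frac_le mult_mono) auto
  also have "\<dots> = (4 * norm L + 4) * C * e / D" using Dpos C0 Ppos by (simp add: field_simps)
  also have "\<dots> \<le> (8 + 8 * lam * C) * C * exp (- (k * c0 * S)) / (c0 * S)"
  proof (intro frac_le mult_mono)
    show "4 * norm L + 4 \<le> 8 + 8 * lam * C" using nL by linarith
    show "e \<le> exp (- (k * c0 * S))" unfolding e_def using D0 k
      by (simp add: mult.assoc mult_left_mono)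
  qed (use C0 Dpos D0 c0 S0 lam k epos in auto)
  finally show "norm (( L * exp (\<i> * sin \<phi> * of_real (\<tau> - \<eta>))
         + exp (\<i> * sin \<phi> * of_real (\<tau> + \<eta> - 2 * q) - 2 * \<i> * \<phi>)
         - L * exp (\<i> * sin \<phi> * of_real (\<tau> + \<xi> - 2 * q) - 2 * \<i> * \<phi>)
         - exp (\<i> * sin \<phi> * of_real (\<tau> - \<xi>)))
        / (2 * tan \<phi> * (1 + \<i> * of_real lam * sin \<phi> - exp (- 2 * \<i> * \<phi> - 2 * of_real q * \<i> * sin \<phi>))))
      \<le> (8 + 8 * lam * C) * C * exp (- ((\<tau> - 2 * q) * c0 * S)) / (c0 * S)"
    by (simp add: N_def L_def E_def s_def k_def)
qed

lemma contH:
  fixes lam q \<tau> \<eta> \<xi> :: real and z :: complex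
  assumes "sin z \<noteq> 0" "cos z \<noteq> 0"
    "1 + \<i> * of_real lam * sin z - exp (- 2 * \<i> * z - 2 * of_real q * \<i> * sin z) \<noteq> 0"
  shows "isCont (\<lambda>\<phi>. ((( 1 + \<i> * of_real lam * sin \<phi>) * exp (\<i> * sin \<phi> * of_real (\<tau> - \<eta>))
         + exp (\<i> * sin \<phi> * of_real (\<tau> + \<eta> - 2 * q) - 2 * \<i> * \<phi>)
         - ( 1 + \<i> * of_real lam * sin \<phi>) * exp (\<i> * sin \<phi> * of_real (\<tau> + \<xi> - 2 * q) - 2 * \<i> * \<phi>)
         - exp (\<i> * sin \<phi> * of_real (\<tau> - \<xi>)))
        / (2 * tan \<phi> * (1 + \<i> * of_real lam * sin \<phi> - exp (- 2 * \<i> * \<phi> - 2 * of_real q * \<i> * sin \<phi>))))) z"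
  unfolding tan_def using assms
  by (intro continuous_intros) auto

theorem mainTheorem1:
  fixes A \<mu> a \<epsilon> t x y :: real
  assumes "A > 0" "\<mu> > 0" "a > 0"
    and "0 < \<epsilon>" "\<epsilon> < pi / 2"
    and "t > 2 * a"
    and "0 < x" "x < a" "0 < y" "y < a"
  shows "(\<forall>\<^sub>F R in at_top.
            (\<lambda>\<alpha>. Kint A \<mu> a t x y (Complex \<alpha> R)) integrable_on {-pi/2 + \<epsilon> .. pi/2 - \<epsilon>})
       \<and> ((\<lambda>R. arc_integral A \<mu> a \<epsilon> t x y R) \<longlongrightarrow> 0) at_top"
proof -
  note as = assms
  define lam where "lam = 2 * \<mu> / A"
  define q where "q = a * \<mu>"
  define \<tau> where "\<tau> = \<mu> * t"
  define \<eta> where "\<eta> = \<mu> * \<bar>x - y\<bar>"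
  define \<xi> where "\<xi> = \<mu> * (x + y)"
  define c0 where "c0 = sin \<epsilon>"
  define I where "I = {-pi/2 + \<epsilon> .. pi/2 - \<epsilon>}"
  define S where "S = (\<lambda>R::real. (exp R - exp (-R)) / 2)"
  define C where "C = (\<lambda>R::real. (exp R + exp (-R)) / 2)"
  define G where "G = (\<lambda>R. (8 + 8 * lam * C R) * C R * exp (- ((\<tau> - 2 * q) * c0 * S R)) / (c0 * S R))"
  define K where "K = (\<lambda>R \<alpha>. Kint A \<mu> a t x y (Complex \<alpha> R))"
  have lam: "lam \<ge> 0" using as by (simp add: lam_def)
  have q: "q \<ge> 0" using as by (simp add: q_def)
  have tau: "\<tau> > 2 * q" using as by (simp add: \<tau>_def q_def)
  have eta: "0 \<le> \<eta>" "\<eta> \<le> 4 * q" using as by (auto simp: \<eta>_def q_def intro!: mult_left_mono)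
  have xi: "0 \<le> \<xi>" "\<xi> \<le> 4 * q" using as by (auto simp: \<xi>_def q_def intro!: mult_left_mono)
  have c0: "c0 > 0" unfolding c0_def using as by (intro sin_gt_zero) auto
  have cosI: "cos \<alpha> \<ge> c0" if "\<alpha> \<in> I" for \<alpha>
  proof -
    have "cos (pi/2 - \<epsilon>) \<le> cos \<bar>\<alpha>\<bar>" using that as unfolding I_def
      by (intro cos_monotone_0_pi_le) auto
    moreover have "cos \<bar>\<alpha>\<bar> = cos \<alpha>" by (cases "\<alpha> \<ge> 0") auto
    ultimately show ?thesis by (simp add: c0_def cos_diff)
  qed
  have Kform: "K R \<alpha> = ((( 1 + \<i> * of_real lam * sin (Complex \<alpha> R)) * exp (\<i> * sin (Complex \<alpha> R) * of_real (\<tau> - \<eta>))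
         + exp (\<i> * sin (Complex \<alpha> R) * of_real (\<tau> + \<eta> - 2 * q) - 2 * \<i> * (Complex \<alpha> R))
         - ( 1 + \<i> * of_real lam * sin (Complex \<alpha> R)) * exp (\<i> * sin (Complex \<alpha> R) * of_real (\<tau> + \<xi> - 2 * q) - 2 * \<i> * (Complex \<alpha> R))
         - exp (\<i> * sin (Complex \<alpha> R) * of_real (\<tau> - \<xi>)))
        / (2 * tan (Complex \<alpha> R) * (1 + \<i> * of_real lam * sin (Complex \<alpha> R) - exp (- 2 * \<i> * (Complex \<alpha> R) - 2 * of_real q * \<i> * sin (Complex \<alpha> R)))))" for R \<alpha>
    by (simp add: K_def Kint_def Let_def Fres_def lam_def q_def \<tau>_def \<eta>_def \<xi>_def)
  define good where "good = (\<lambda>R. R > 0 \<and> exp (2 * R) \<ge> 2 * (1 + 2 * lam * C R))"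
  have ev: "eventually good at_top"
    unfolding good_def C_def by (intro eventually_conj) real_asymp+
  note pw = pointwise[OF lam q tau eta xi _ c0 cosI, folded C_def S_def]
  have bound: "norm (K R \<alpha>) \<le> G R" if "good R" "\<alpha> \<in> I" for R \<alpha>
    using pw(4)[of R \<alpha>] that unfolding Kform G_def good_def S_def C_def by auto
  have cont: "continuous_on I (K R)" if "good R" for R
  proof -
    have nz: "sin (Complex \<alpha> R) \<noteq> 0" "cos (Complex \<alpha> R) \<noteq> 0"
       "1 + \<i> * of_real lam * sin (Complex \<alpha> R) - exp (- 2 * \<i> * (Complex \<alpha> R) - 2 * of_real q * \<i> * sin (Complex \<alpha> R)) \<noteq> 0"
      if "\<alpha> \<in> I" for \<alpha>
      using pw(1-3)[of R \<alpha>] that \<open>good R\<close> unfolding good_def C_def by auto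
    show ?thesis
    proof (rule continuous_at_imp_continuous_on, intro ballI)
      fix \<alpha> assume "\<alpha> \<in> I"
      have c1: "isCont (\<lambda>\<alpha>. Complex \<alpha> R) \<alpha>" unfolding Complex_eq by (intro continuous_intros)
      have "isCont (\<lambda>\<alpha>. K R \<alpha>) \<alpha>"
        unfolding Kform by (rule isCont_o2[OF c1 contH]) (use nz[OF \<open>\<alpha> \<in> I\<close>] in auto)
      then show "isCont (K R) \<alpha>" by simp
    qed
  qed
  have intg: "K R integrable_on I" if "good R" for R
    using cont[OF that] unfolding I_def by (intro integrable_continuous_interval)
  show ?thesis
  proof
    show "\<forall>\<^sub>F R in at_top. (\<lambda>\<alpha>. Kint A \<mu> a t x y (Complex \<alpha> R)) integrable_on {-pi/2 + \<epsilon> .. pi/2 - \<epsilon>}"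
      using ev by eventually_elim (use intg in \<open>simp add: K_def I_def\<close>)
    have len: "Henstock_Kurzweil_Integration.content I = pi - 2 * \<epsilon>" using as by (simp add: I_def)
    have nb: "norm (arc_integral A \<mu> a \<epsilon> t x y R) \<le> G R * (pi - 2 * \<epsilon>) / (2 * pi)" if "good R" for R
    proof -
      have "norm (integral I (K R)) \<le> G R * Henstock_Kurzweil_Integration.content I"
        unfolding I_def
      proof (rule has_integral_bound_real[where S="{}"])
        show "0 \<le> G R" using order_trans[OF norm_ge_zero bound[OF that, of 0]] as by (simp add: I_def)
        show "(K R has_integral integral {-pi/2 + \<epsilon> .. pi/2 - \<epsilon>} (K R)) {-pi/2 + \<epsilon> .. pi/2 - \<epsilon>}"
          using intg[OF that] unfolding I_def by (rule integrable_integral)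
      qed (use bound[OF that] in \<open>auto simp: I_def\<close>)
      then show ?thesis unfolding arc_integral_def len
        by (simp add: K_def I_def norm_divide norm_mult divide_right_mono)
    qed
    have "((\<lambda>R. G R * (pi - 2 * \<epsilon>) / (2 * pi)) \<longlongrightarrow> 0) at_top"
      unfolding G_def S_def C_def using c0 tau by real_asymp
    then show "((\<lambda>R. arc_integral A \<mu> a \<epsilon> t x y R) \<longlongrightarrow> 0) at_top"
      by (rule Lim_null_comparison[rotated]) (use ev nb in \<open>auto elim: eventually_mono\<close>)
  qed
qed

end
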